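(* Let $G=D_{2n}$ be the dihedral group of order $2n$ with $n$ odd, and let $\mathcal{C}\subseteq G\setminus\{1\}$ be a subset closed under conjugation by $G$ which generates $G$. Then $K_{\mathcal{C}}$ is non-degenerate.
   Context: For a finite group $G$ and a subset $\mathcal{C}\subseteq G\setminus\{1\}$ closed under conjugation, the Killing form $K_{\mathcal{C}}$ is the bilinear form on the complex vector space with basis $\mathcal{C}$ given on basis elements by $K_{\mathcal{C}}(a,b)=|C_G(ab)\cap\mathcal{C}|$; it is non-degenerate if the matrix $(K_{\mathcal{C}}(a,b))_{a,b\in\mathcal{C}}$ is invertible. *)

theory Defs
  imports Complex_Main "HOL-Algebra.Algebra"
begin

text \<open>The dihedral group of order 2n: the element (k, b) stands for r^k s^b with
  0 \<le> k < n, where r is a rotation of order n and s a reflection with s r s = r^-1.\<close>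
definition dihedral_group :: "nat \<Rightarrow> (nat \<times> bool) monoid" where
  "dihedral_group n =
     \<lparr> carrier = {0..<n} \<times> UNIV,
       monoid.mult = (\<lambda>(a, b) (c, d). ((if b then a + n - c else a + c) mod n, b \<noteq> d)),
       monoid.one = (0, False) \<rparr>"

definition centralizer :: "('a, 'b) monoid_scheme \<Rightarrow> 'a \<Rightarrow> 'a set" where
  "centralizer G x = {g \<in> carrier G. g \<otimes>\<^bsub>G\<^esub> x = x \<otimes>\<^bsub>G\<^esub> g}"

definition conj_closed :: "('a, 'b) monoid_scheme \<Rightarrow> 'a set \<Rightarrow> bool" where
  "conj_closed G C \<longleftrightarrow>
     (\<forall>g\<in>carrier G. \<forall>c\<in>C. g \<otimes>\<^bsub>G\<^esub> c \<otimes>\<^bsub>G\<^esub> inv\<^bsub>G\<^esub> g \<in> C)"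

definition killing_matrix :: "('a, 'b) monoid_scheme \<Rightarrow> 'a set \<Rightarrow> 'a \<Rightarrow> 'a \<Rightarrow> complex" where
  "killing_matrix G C a b = of_nat (card (centralizer G (a \<otimes>\<^bsub>G\<^esub> b) \<inter> C))"

definition set_matrix_invertible :: "'a set \<Rightarrow> ('a \<Rightarrow> 'a \<Rightarrow> complex) \<Rightarrow> bool" where
  "set_matrix_invertible I M \<longleftrightarrow>
     (\<exists>N. (\<forall>i\<in>I. \<forall>j\<in>I. (\<Sum>k\<in>I. M i k * N k j) = (if i = j then 1 else 0)) \<and>
          (\<forall>i\<in>I. \<forall>j\<in>I. (\<Sum>k\<in>I. N i k * M k j) = (if i = j then 1 else 0)))"

definition killing_nondegenerate :: "('a, 'b) monoid_scheme \<Rightarrow> 'a set \<Rightarrow> bool" where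
  "killing_nondegenerate G C \<longleftrightarrow> set_matrix_invertible C (killing_matrix G C)"

end

theory Submission
  imports Defs
begin


lemma smi_cong:
  assumes "\<And>i j. i \<in> I \<Longrightarrow> j \<in> I \<Longrightarrow> M i j = M' i j"
  shows "set_matrix_invertible I M \<longleftrightarrow> set_matrix_invertible I M'"
  unfolding set_matrix_invertible_def using assms by (simp cong: sum.cong)

lemma sum_prod_delta:
  fixes al be ga de :: complex
  assumes "finite A" "a \<in> A" "b \<in> A"
  shows "(\<Sum>k\<in>A. (al + be * (if k = a then 1 else 0)) * (ga + de * (if k = b then 1 else 0)))
     = of_nat (card A) * al * ga + al * de + be * ga + be * de * (if a = b then 1 else 0)"
proof -
  have "(\<Sum>k\<in>A. (al + be * (if k = a then 1 else 0)) * (ga + de * (if k = b then 1 else 0)))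
     = (\<Sum>k\<in>A. al * ga + (if k = b then al * de else 0) + (if k = a then be * ga else 0)
          + (if k = a then (if a = b then be * de else 0) else 0))"
    by (rule sum.cong) (auto simp: algebra_simps)
  also have "\<dots> = of_nat (card A) * al * ga + al * de + be * ga + be * de * (if a = b then 1 else 0)"
    using assms by (simp add: sum.distrib)
  finally show ?thesis .
qed

lemma eqs_aux:
  fixes N M E :: complex
  assumes N: "N \<noteq> 0" and Enz: "E \<noteq> 0" and E: "E = (M^2+N-1)*(1+M)+1"
  shows "(- M * (M^2 + N - 1) / (N * (N * E))) * (N + M * N) + M * (- 1 / (N * E)) = - M / N"
    and "(- 1 / (N * E)) * (N + M * N) + M * ((1 - M - M^2) / (N * E)) = - 1 / N"
    and "N * (- M * (M^2 + N - 1) / (N * (N * E))) + (M^2 + N) * (- 1 / (N * E)) = - 1 / N"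
    and "N * (- 1 / (N * E)) + (M^2 + N) * ((1 - M - M^2) / (N * E)) = - M / N"
  using N Enz by (simp_all add: field_simps) (simp_all add: E eval_nat_numeral algebra_simps)

lemma abstract_inv:
  fixes C :: "'a set" and t :: "'a \<Rightarrow> bool" and s :: "'a \<Rightarrow> 'a"
  assumes fin: "finite C"
    and cS: "card {k\<in>C. t k} = n" and npos: "n > 0" and cR: "card {k\<in>C. \<not> t k} = m"
    and sC: "\<And>k. k \<in> C \<Longrightarrow> s k \<in> C"
    and st: "\<And>k. k \<in> C \<Longrightarrow> t (s k) = t k"
    and ss: "\<And>k. k \<in> C \<Longrightarrow> s (s k) = k"
  shows "set_matrix_invertible C (\<lambda>i k. if t i \<noteq> t k then 1 else of_nat m + of_nat n * (if k = s i then 1 else 0))"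
proof -
  define K where "K = (\<lambda>i k. if t i \<noteq> t k then 1 else of_nat m + of_nat n * (if k = s i then 1 else (0::complex)))"
  define S where "S = {k\<in>C. t k}"
  define R where "R = {k\<in>C. \<not> t k}"
  define E :: complex where "E = (of_nat m^2+of_nat n-1)*(1+of_nat m)+1"
  define x :: complex where "x = - of_nat m * (of_nat m^2 + of_nat n - 1) / (of_nat n * (of_nat n * E))"
  define y :: complex where "y = - 1 / (of_nat n * E)"
  define w :: complex where "w = (1 - of_nat m - of_nat m^2) / (of_nat n * E)"
  define N where "N = (\<lambda>k j. if t k \<noteq> t j then y else (if t j then x else w) + (if k = s j then 1 / of_nat n else 0))"
  have "E = of_nat ((m^2+(n-1))*(1+m)+1)" unfolding E_def using npos by (cases n) (simp_all add: algebra_simps)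
  then have Enz: "E \<noteq> 0" by (metis of_nat_neq_0 Suc_eq_plus1)
  have nnz: "(of_nat n :: complex) \<noteq> 0" using npos by simp
  note ee = eqs_aux[OF nnz Enz E_def, folded x_def y_def w_def]
  have e1: "x * (of_nat n + of_nat m * of_nat n) + of_nat m * y = - of_nat m / of_nat n" by (rule ee(1))
  have e2: "y * (of_nat n + of_nat m * of_nat n) + of_nat m * w = - 1 / of_nat n" by (rule ee(2))
  have e3: "of_nat n * x + (of_nat m ^ 2 + of_nat n) * y = - 1 / of_nat n" by (rule ee(3))
  have e4: "of_nat n * y + (of_nat m ^ 2 + of_nat n) * w = - of_nat m / of_nat n" by (rule ee(4))
  have CSR: "C = S \<union> R" "S \<inter> R = {}" "finite S" "finite R" using fin unfolding S_def R_def by auto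
  have right: "(\<Sum>k\<in>C. K i k * N k j) = (if i = j then 1 else 0)" if ij: "i \<in> C" "j \<in> C" for i j
  proof -
    have "(\<Sum>k\<in>C. K i k * N k j) = (\<Sum>k\<in>S. K i k * N k j) + (\<Sum>k\<in>R. K i k * N k j)"
      using CSR by (simp add: sum.union_disjoint)
    also have "\<dots> = (if i = j then 1 else 0)"
    proof -
      have siS: "s i \<in> S" if "t i" using that ij sC st unfolding S_def by auto
      have sjS: "s j \<in> S" if "t j" using that ij sC st unfolding S_def by auto
      have siR: "s i \<in> R" if "\<not> t i" using that ij sC st unfolding R_def by auto
      have sjR: "s j \<in> R" if "\<not> t j" using that ij sC st unfolding R_def by auto
      have sij: "(s i = s j) = (i = j)" using ij ss by metis
      have cS': "card S = n" and cR': "card R = m" using cS cR S_def R_def by auto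
      consider "t i" "t j" | "t i" "\<not> t j" | "\<not> t i" "t j" | "\<not> t i" "\<not> t j" by blast
      then show ?thesis
      proof cases
        case 1
        have A: "(\<Sum>k\<in>S. K i k * N k j) = (\<Sum>k\<in>S. (of_nat m + of_nat n * (if k = s i then 1 else 0)) * (x + (1 / of_nat n) * (if k = s j then 1 else 0)))"
          by (rule sum.cong) (auto simp: S_def K_def N_def 1)
        have B: "(\<Sum>k\<in>R. K i k * N k j) = (\<Sum>k\<in>R. y)"
          by (rule sum.cong) (auto simp: R_def K_def N_def 1)
        show ?thesis unfolding A B sum_prod_delta[OF CSR(3) siS[OF 1(1)] sjS[OF 1(2)]]
          using e1 nnz by (simp add: cS' cR' sij field_simps)
      next
        case 2
        have A: "(\<Sum>k\<in>S. K i k * N k j) = (\<Sum>k\<in>S. (of_nat m + of_nat n * (if k = s i then 1 else 0)) * (y + 0 * (if k = s i then 1 else 0)))"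
          by (rule sum.cong) (auto simp: S_def K_def N_def 2)
        have B: "(\<Sum>k\<in>R. K i k * N k j) = (\<Sum>k\<in>R. (1 + 0 * (if k = s j then 1 else 0)) * (w + (1 / of_nat n) * (if k = s j then 1 else 0)))"
          by (rule sum.cong) (auto simp: R_def K_def N_def 2)
        have "i \<noteq> j" using 2 by auto
        then show ?thesis unfolding A B sum_prod_delta[OF CSR(3) siS[OF 2(1)] siS[OF 2(1)]]
            sum_prod_delta[OF CSR(4) sjR[OF 2(2)] sjR[OF 2(2)]]
          using e2 nnz by (simp add: cS' cR' field_simps)
      next
        case 3
        have A: "(\<Sum>k\<in>S. K i k * N k j) = (\<Sum>k\<in>S. (1 + 0 * (if k = s j then 1 else 0)) * (x + (1 / of_nat n) * (if k = s j then 1 else 0)))"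
          by (rule sum.cong) (auto simp: S_def K_def N_def 3)
        have B: "(\<Sum>k\<in>R. K i k * N k j) = (\<Sum>k\<in>R. (of_nat m + of_nat n * (if k = s i then 1 else 0)) * (y + 0 * (if k = s i then 1 else 0)))"
          by (rule sum.cong) (auto simp: R_def K_def N_def 3)
        have "i \<noteq> j" using 3 by auto
        then show ?thesis unfolding A B sum_prod_delta[OF CSR(3) sjS[OF 3(2)] sjS[OF 3(2)]]
            sum_prod_delta[OF CSR(4) siR[OF 3(1)] siR[OF 3(1)]]
          using e3 nnz by (simp add: cS' cR' field_simps power2_eq_square)
      next
        case 4
        have A: "(\<Sum>k\<in>S. K i k * N k j) = (\<Sum>k\<in>S. y)"
          by (rule sum.cong) (auto simp: S_def K_def N_def 4)
        have B: "(\<Sum>k\<in>R. K i k * N k j) = (\<Sum>k\<in>R. (of_nat m + of_nat n * (if k = s i then 1 else 0)) * (w + (1 / of_nat n) * (if k = s j then 1 else 0)))"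
          by (rule sum.cong) (auto simp: R_def K_def N_def 4)
        show ?thesis unfolding A B sum_prod_delta[OF CSR(4) siR[OF 4(1)] sjR[OF 4(2)]]
          using e4 nnz by (simp add: cS' cR' sij field_simps power2_eq_square)
      qed
    qed
    finally show ?thesis .
  qed
  have iff: "(k = s i) = (i = s k)" if "i \<in> C" "k \<in> C" for i k
    using that ss by metis
  have Ksym: "K i k = K k i" if "i \<in> C" "k \<in> C" for i k
    unfolding K_def using iff[OF that] by auto
  have Nsym: "N i k = N k i" if "i \<in> C" "k \<in> C" for i k
    unfolding N_def using iff[OF that] by auto
  have left: "(\<Sum>k\<in>C. N i k * K k j) = (if i = j then 1 else 0)" if ij: "i \<in> C" "j \<in> C" for i j
  proof -
    have "(\<Sum>k\<in>C. N i k * K k j) = (\<Sum>k\<in>C. K j k * N k i)"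
      by (rule sum.cong) (use ij Ksym Nsym in auto)
    also have "\<dots> = (if i = j then 1 else 0)" using right[OF ij(2) ij(1)] by auto
    finally show ?thesis .
  qed
  show ?thesis unfolding set_matrix_invertible_def K_def[symmetric]
    by (intro exI[of _ N] conjI ballI right left)
qed


lemma odd_dvd2:
  fixes z :: int and n :: nat
  assumes "odd n" "int n dvd 2 * z" "\<bar>z\<bar> < int n"
  shows "z = 0"
proof (rule ccontr)
  assume z: "z \<noteq> 0"
  have "coprime (int n) 2" using assms(1) by (simp add: coprime_commute)
  then have "int n dvd z" using assms(2) coprime_dvd_mult_right_iff by blast
  then have "\<bar>int n\<bar> \<le> \<bar>z\<bar>" using z by (rule dvd_imp_le_int[rotated])
  then show False using assms(3) by simp
qed

lemma modeq_dvd: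
  fixes u v :: int and n :: nat
  assumes "u mod int n = v mod int n"
  shows "int n dvd u - v"
  using assms by (simp add: mod_eq_dvd_iff)

lemma nat_sub_int:
  fixes a b c :: nat
  shows "c \<le> a + b \<Longrightarrow> int (a + b - c) = int a + int b - int c"
  by simp

lemma AR1:
  fixes n r c :: nat
  assumes "odd n" "r < n" "c < n" "0 < r"
  shows "(c + n - r) mod n \<noteq> (r + c) mod n"
proof
  assume h: "(c + n - r) mod n = (r + c) mod n"
  have "int ((c + n - r) mod n) = int ((r + c) mod n)" using h by simp
  then have "(int c + int n - int r) mod int n = (int r + int c) mod int n"
    using assms by (simp only: of_nat_mod of_nat_add nat_sub_int)
  then have "int n dvd (int c + int n - int r) - (int r + int c)" by (rule modeq_dvd)
  moreover have "(int c + int n - int r) - (int r + int c) = int n + 2 * (- int r)" by simp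
  ultimately have "int n dvd 2 * (- int r)" by (metis dvd_add_right_iff dvd_refl)
  moreover have "\<bar>- int r\<bar> < int n" using assms by simp
  ultimately have "- int r = 0" by (rule odd_dvd2[OF assms(1)])
  then show False using assms by simp
qed

lemma AR2:
  fixes n r c :: nat
  assumes "odd n" "r < n" "c < n" "(c + r) mod n = (r + n - c) mod n"
  shows "c = 0"
proof -
  have "int ((c + r) mod n) = int ((r + n - c) mod n)" using assms by simp
  moreover have "int ((c + r) mod n) = (int c + int r) mod int n" by (simp add: of_nat_mod)
  moreover have "int ((r + n - c) mod n) = int (r + n - c) mod int n" by (rule of_nat_mod)
  moreover have "int (r + n - c) = int r + int n - int c" using assms by simp
  ultimately have "(int c + int r) mod int n = (int r + int n - int c) mod int n" by simp
  then have "int n dvd (int c + int r) - (int r + int n - int c)" by (rule modeq_dvd)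
  moreover have "(int c + int r) - (int r + int n - int c) = - int n + 2 * int c" by simp
  ultimately have "int n dvd 2 * int c" by (metis dvd_add_right_iff dvd_refl dvd_minus_iff)
  moreover have "\<bar>int c\<bar> < int n" using assms by simp
  ultimately have "int c = 0" by (rule odd_dvd2[OF assms(1)])
  then show ?thesis by simp
qed

lemma AR3:
  fixes n r c :: nat
  assumes "odd n" "r < n" "c < n" "(c + n - r) mod n = (r + n - c) mod n"
  shows "c = r"
proof -
  have "int ((c + n - r) mod n) = int ((r + n - c) mod n)" using assms by simp
  moreover have "int ((c + n - r) mod n) = int (c + n - r) mod int n" by (rule of_nat_mod)
  moreover have "int ((r + n - c) mod n) = int (r + n - c) mod int n" by (rule of_nat_mod)
  moreover have "int (r + n - c) = int r + int n - int c" using assms by simp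
  moreover have "int (c + n - r) = int c + int n - int r" using assms by simp
  ultimately have "(int c + int n - int r) mod int n = (int r + int n - int c) mod int n" by simp
  then have "int n dvd (int c + int n - int r) - (int r + int n - int c)" by (rule modeq_dvd)
  moreover have "(int c + int n - int r) - (int r + int n - int c) = 2 * (int c - int r)" by simp
  ultimately have "int n dvd 2 * (int c - int r)" by simp
  moreover have "\<bar>int c - int r\<bar> < int n" using assms by simp
  ultimately have "int c - int r = 0" by (rule odd_dvd2[OF assms(1)])
  then show ?thesis by simp
qed

lemma AR_sol:
  fixes n a c :: nat
  assumes "a < n" "c < n" "(a + c) mod n = 0"
  shows "c = (n - a) mod n"
proof -
  have "n dvd a + c" using assms by auto
  then obtain q where q: "a + c = n * q" by blast
  have "q < 2" using q assms by (metis add_less_mono mult_2 nat_mult_less_cancel_disj not_less_eq less_2_cases_iff mult.commute)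
  then consider "q = 0" | "q = 1" by linarith
  then show ?thesis using q assms by cases auto
qed

lemma AR_exists:
  fixes n k j :: nat
  assumes "odd n" "k < n" "j < n"
  shows "\<exists>t<n. (k + 2 * t) mod n = j"
proof (cases "k \<le> j")
  case True
  show ?thesis
  proof (cases "even (j - k)")
    case True
    then obtain t where t: "j - k = 2 * t" by blast
    then show ?thesis using \<open>k \<le> j\<close> assms by (intro exI[of _ t]) auto
  next
    case False
    then have "even (j - k + n)" using assms(1) by simp
    then obtain t where t: "j - k + n = 2 * t" by blast
    then have "k + 2 * t = j + n" using \<open>k \<le> j\<close> by simp
    then show ?thesis using t assms by (intro exI[of _ t]) auto
  qed
next
  case False
  show ?thesis
  proof (cases "even (j + n - k)")
    case True
    then obtain t where t: "j + n - k = 2 * t" by blast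
    then have "k + 2 * t = j + n" using False assms by simp
    then show ?thesis using t assms by (intro exI[of _ t]) auto
  next
    case odd: False
    then have "even (j + n - k + n)" using assms(1) by simp
    then obtain t where t: "j + n - k + n = 2 * t" by blast
    then have "k + 2 * t = j + 2 * n" using False assms by simp
    then show ?thesis using t False assms by (intro exI[of _ t]) auto
  qed
qed

lemma AR_inv0:
  fixes n a :: nat
  assumes "a < n"
  shows "(a + (n - a) mod n) mod n = 0" "((n - a) mod n + a) mod n = 0"
  using assms by (cases "a = 0"; simp)+

lemma AR_ref:
  fixes n a c :: nat
  assumes "a < n" "c < n" "(a + n - c) mod n = 0"
  shows "c = a"
proof -
  have "n dvd a + n - c" using assms by auto
  then obtain q where q: "a + n - c = n * q" by blast
  have "q \<noteq> 0"
  proof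
    assume "q = 0"
    then have "a + n - c = 0" using q by simp
    then show False using assms by arith
  qed
  moreover have "q < 2"
  proof (rule ccontr)
    assume "\<not> q < 2"
    then have "n * 2 \<le> n * q" by simp
    then show False using q assms by linarith
  qed
  ultimately have "q = 1" by linarith
  then show ?thesis using q assms by simp
qed

lemma AR_conj:
  fixes n t k :: nat
  assumes "t < n"
  shows "((t + k) mod n + n - (n - t) mod n) mod n = (k + 2 * t) mod n"
proof (cases "t = 0")
  case True
  then show ?thesis by simp
next
  case False
  then have "(n - t) mod n = n - t" using assms by simp
  then have "((t + k) mod n + n - (n - t) mod n) = (t + k) mod n + t" using assms by simp
  then have "((t + k) mod n + n - (n - t) mod n) mod n = ((t + k) + t) mod n" by (simp add: mod_add_left_eq)
  moreover have "(t + k) + t = k + 2 * t" by simp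
  ultimately show ?thesis by simp
qed

lemma AR_invinv:
  fixes n a :: nat
  assumes "a < n"
  shows "(n - (n - a) mod n) mod n = a"
  using assms by (cases "a = 0") auto

lemma dg_mult: "(a, b) \<otimes>\<^bsub>dihedral_group n\<^esub> (c, d) = ((if b then a + n - c else a + c) mod n, b \<noteq> d)"
  by (simp add: dihedral_group_def)

lemma dg_carrier: "carrier (dihedral_group n) = {0..<n} \<times> UNIV"
  by (simp add: dihedral_group_def)

lemma dg_one: "\<one>\<^bsub>dihedral_group n\<^esub> = (0, False)"
  by (simp add: dihedral_group_def)

lemma dg_inv_rot:
  assumes "a < n"
  shows "inv\<^bsub>dihedral_group n\<^esub> (a, False) = ((n - a) mod n, False)"
  unfolding m_inv_def
proof (rule the_equality)
  show "((n - a) mod n, False) \<in> carrier (dihedral_group n) \<and>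
    (a, False) \<otimes>\<^bsub>dihedral_group n\<^esub> ((n - a) mod n, False) = \<one>\<^bsub>dihedral_group n\<^esub> \<and>
    ((n - a) mod n, False) \<otimes>\<^bsub>dihedral_group n\<^esub> (a, False) = \<one>\<^bsub>dihedral_group n\<^esub>"
    using assms AR_inv0[OF assms] by (simp add: dg_mult dg_carrier dg_one)
next
  fix y assume y: "y \<in> carrier (dihedral_group n) \<and>
    (a, False) \<otimes>\<^bsub>dihedral_group n\<^esub> y = \<one>\<^bsub>dihedral_group n\<^esub> \<and>
    y \<otimes>\<^bsub>dihedral_group n\<^esub> (a, False) = \<one>\<^bsub>dihedral_group n\<^esub>"
  obtain c d where cd: "y = (c, d)" by fastforce
  have "c < n" "d = False" "(a + c) mod n = 0" using y unfolding cd by (auto simp: dg_mult dg_carrier dg_one)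
  then show "y = ((n - a) mod n, False)" using AR_sol[OF assms] cd by auto
qed

lemma dg_inv_ref:
  assumes "a < n"
  shows "inv\<^bsub>dihedral_group n\<^esub> (a, True) = (a, True)"
  unfolding m_inv_def
proof (rule the_equality)
  show "(a, True) \<in> carrier (dihedral_group n) \<and>
    (a, True) \<otimes>\<^bsub>dihedral_group n\<^esub> (a, True) = \<one>\<^bsub>dihedral_group n\<^esub> \<and>
    (a, True) \<otimes>\<^bsub>dihedral_group n\<^esub> (a, True) = \<one>\<^bsub>dihedral_group n\<^esub>"
    using assms by (simp add: dg_mult dg_carrier dg_one)
next
  fix y assume y: "y \<in> carrier (dihedral_group n) \<and>
    (a, True) \<otimes>\<^bsub>dihedral_group n\<^esub> y = \<one>\<^bsub>dihedral_group n\<^esub> \<and>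
    y \<otimes>\<^bsub>dihedral_group n\<^esub> (a, True) = \<one>\<^bsub>dihedral_group n\<^esub>"
  obtain c d where cd: "y = (c, d)" by fastforce
  have "c < n" "d = True" "(a + n - c) mod n = 0" using y unfolding cd by (auto simp: dg_mult dg_carrier dg_one)
  then show "y = (a, True)" using AR_ref[OF assms] cd by auto
qed

theorem theorem9p1:
  fixes n :: nat and C :: "(nat \<times> bool) set"
  assumes "odd n"
    and "C \<subseteq> carrier (dihedral_group n) - {\<one>\<^bsub>dihedral_group n\<^esub>}"
    and "conj_closed (dihedral_group n) C"
    and "generate (dihedral_group n) C = carrier (dihedral_group n)"
  shows "killing_nondegenerate (dihedral_group n) C"
proof -
  let ?G = "dihedral_group n"
  have odd: "odd n" by fact
  have npos: "n > 0" using assms(1) by (cases n) auto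
  have Ccar: "\<And>a b. (a, b) \<in> C \<Longrightarrow> a < n" using assms(2) by (auto simp: dg_carrier)
  have C1: "(0, False) \<notin> C" using assms(2) by (auto simp: dg_one)
  have cc: "\<And>g x. g \<in> carrier ?G \<Longrightarrow> x \<in> C \<Longrightarrow> g \<otimes>\<^bsub>?G\<^esub> x \<otimes>\<^bsub>?G\<^esub> inv\<^bsub>?G\<^esub> g \<in> C"
    using assms(3) unfolding conj_closed_def by blast
  have exref: "\<exists>k. (k, True) \<in> C"
  proof (rule ccontr)
    assume no: "\<not> (\<exists>k. (k, True) \<in> C)"
    have "x \<in> {0..<n} \<times> {False}" if "x \<in> generate ?G C" for x
      using that
    proof (induction rule: generate.induct)
      case one
      then show ?case using npos by (simp add: dg_one)
    next
      case (incl h)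
      then obtain a b where "h = (a, b)" by fastforce
      then show ?case using incl no Ccar by (cases b) auto
    next
      case (inv h)
      then obtain a b where h: "h = (a, b)" by fastforce
      then have "b = False" "a < n" using inv no Ccar by (cases b; auto)+
      then show ?case using h npos by (simp add: dg_inv_rot)
    next
      case (eng h1 h2)
      then show ?case using npos by (auto simp: dg_mult)
    qed
    moreover have "(0, True) \<in> generate ?G C" using assms(4) npos by (simp add: dg_carrier)
    ultimately show False by auto
  qed
  have allref: "(j, True) \<in> C" if jn: "j < n" for j
  proof -
    obtain k where k: "(k, True) \<in> C" using exref by blast
    have kn: "k < n" using Ccar k by blast
    obtain t where t: "t < n" "(k + 2 * t) mod n = j" using AR_exists[OF odd kn jn] by blast
    have "(t, False) \<otimes>\<^bsub>?G\<^esub> (k, True) \<otimes>\<^bsub>?G\<^esub> inv\<^bsub>?G\<^esub> (t, False) \<in> C"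
      using cc[OF _ k] t by (simp add: dg_carrier)
    also have "(t, False) \<otimes>\<^bsub>?G\<^esub> (k, True) \<otimes>\<^bsub>?G\<^esub> inv\<^bsub>?G\<^esub> (t, False) = (j, True)"
      using t AR_conj[OF t(1), of k] by (simp add: dg_inv_rot dg_mult add.commute)
    finally show ?thesis .
  qed
  have rotinv: "((n - a) mod n, False) \<in> C" if "(a, False) \<in> C" for a
  proof -
    have "(0, True) \<otimes>\<^bsub>?G\<^esub> (a, False) \<otimes>\<^bsub>?G\<^esub> inv\<^bsub>?G\<^esub> (0, True) \<in> C"
      using cc[OF _ that] npos by (simp add: dg_carrier)
    also have "(0, True) \<otimes>\<^bsub>?G\<^esub> (a, False) \<otimes>\<^bsub>?G\<^esub> inv\<^bsub>?G\<^esub> (0, True) = ((n - a) mod n, False)"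
      using npos by (simp add: dg_inv_ref dg_mult)
    finally show ?thesis .
  qed
  define s where "s = (\<lambda>x::nat \<times> bool. if snd x then x else ((n - fst x) mod n, False))"
  define R where "R = {k\<in>C. \<not> snd k}"
  define m where "m = card R"
  have finC: "finite C"
  proof (rule finite_subset)
    show "C \<subseteq> {0..<n} \<times> UNIV" using assms(2) by (auto simp: dg_carrier)
  qed simp
  have Seq: "{k\<in>C. snd k} = {0..<n} \<times> {True}" using allref Ccar by auto
  have cS: "card {k\<in>C. snd k} = n" unfolding Seq by (simp add: card_cartesian_product)
  have cC: "card C = n + m"
  proof -
    have "C = {k\<in>C. snd k} \<union> R" "{k\<in>C. snd k} \<inter> R = {}" unfolding R_def by auto
    then have "card C = card {k\<in>C. snd k} + card R" using finC
      by (metis card_Un_disjoint finite_Un)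
    then show ?thesis using cS m_def by simp
  qed
  have sC: "s k \<in> C" if "k \<in> C" for k
    using that rotinv unfolding s_def by (cases k) (auto split: if_splits)
  have st: "snd (s k) = snd k" for k unfolding s_def by auto
  have ss: "s (s k) = k" if "k \<in> C" for k
  proof -
    obtain a b where k: "k = (a, b)" by fastforce
    then have "a < n" using Ccar that by blast
    then show ?thesis unfolding k s_def using AR_invinv by auto
  qed
  have cent_one: "centralizer ?G (0, False) \<inter> C = C"
    using assms(2) by (auto simp: centralizer_def dg_mult dg_carrier)
  have cent_rot: "centralizer ?G (r, False) \<inter> C = R" if "0 < r" "r < n" for r
  proof -
    have "x \<in> centralizer ?G (r, False) \<longleftrightarrow> \<not> snd x" if "x \<in> C" for x
    proof -
      obtain c d where x: "x = (c, d)" by fastforce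
      have c: "c < n" using Ccar \<open>x \<in> C\<close> x by blast
      show ?thesis using AR1[OF odd \<open>r < n\<close> c \<open>0 < r\<close>] c
        by (cases d) (auto simp: x centralizer_def dg_mult dg_carrier add.commute)
    qed
    then show ?thesis unfolding R_def by blast
  qed
  have cent_ref: "centralizer ?G (r, True) \<inter> C = {(r, True)}" if "r < n" for r
  proof -
    have "x \<in> centralizer ?G (r, True) \<longleftrightarrow> x = (r, True)" if "x \<in> C" for x
    proof -
      obtain c d where x: "x = (c, d)" by fastforce
      have c: "c < n" using Ccar \<open>x \<in> C\<close> x by blast
      show ?thesis
      proof (cases d)
        case True
        then show ?thesis using AR3[OF odd \<open>r < n\<close> c] c
          by (auto simp: x centralizer_def dg_mult dg_carrier)
      next
        case False
        have "x = (c, False)" using x False by simp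
        then have "c \<noteq> 0" using C1 \<open>x \<in> C\<close> by metis
        then show ?thesis using AR2[OF odd \<open>r < n\<close> c] c False
          by (auto simp: x centralizer_def dg_mult dg_carrier)
      qed
    qed
    then show ?thesis using allref[OF that] by blast
  qed
  have entry: "killing_matrix ?G C i k =
      (if snd i \<noteq> snd k then 1 else of_nat m + of_nat n * (if k = s i then 1 else 0))"
    if ik: "i \<in> C" "k \<in> C" for i k
  proof -
    obtain a b where i: "i = (a, b)" by fastforce
    obtain c d where k: "k = (c, d)" by fastforce
    have a: "a < n" and c: "c < n" using Ccar ik i k by blast+
    show ?thesis
    proof (cases "b = d")
      case False
      have p: "i \<otimes>\<^bsub>?G\<^esub> k = ((if b then a + n - c else a + c) mod n, True)"
        using False by (simp add: i k dg_mult)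
      show ?thesis unfolding killing_matrix_def p cent_ref[OF mod_less_divisor[OF npos]]
        using False i k by simp
    next
      case True
      show ?thesis
      proof (cases b)
        case b: True
        have p: "i \<otimes>\<^bsub>?G\<^esub> k = ((a + n - c) mod n, False)"
          using True b by (simp add: i k dg_mult)
        show ?thesis
        proof (cases "c = a")
          case True
          then have "(a + n - c) mod n = 0" by simp
          then show ?thesis unfolding killing_matrix_def p using cent_one True b \<open>b = d\<close> cC i k
            by (simp add: s_def)
        next
          case False
          then have "(a + n - c) mod n \<noteq> 0" using AR_ref[OF a c] by blast
          then have "centralizer ?G ((a + n - c) mod n, False) \<inter> C = R"
            using cent_rot npos by simp
          then show ?thesis unfolding killing_matrix_def p using False b \<open>b = d\<close> m_def i k
            by (simp add: s_def)
        qed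
      next
        case b: False
        have p: "i \<otimes>\<^bsub>?G\<^esub> k = ((a + c) mod n, False)"
          using True b by (simp add: i k dg_mult)
        show ?thesis
        proof (cases "(a + c) mod n = 0")
          case True
          then have "c = (n - a) mod n" by (rule AR_sol[OF a c])
          then show ?thesis unfolding killing_matrix_def p using cent_one True b \<open>b = d\<close> cC i k
            by (simp add: s_def)
        next
          case False
          then have "c \<noteq> (n - a) mod n" using AR_inv0(1)[OF a] by auto
          moreover have "centralizer ?G ((a + c) mod n, False) \<inter> C = R"
            using cent_rot npos False by simp
          ultimately show ?thesis unfolding killing_matrix_def p using b \<open>b = d\<close> m_def i k
            by (simp add: s_def)
        qed
      qed
    qed
  qed
  have inv: "set_matrix_invertible C (\<lambda>i k. if snd i \<noteq> snd k then 1 else of_nat m + of_nat n * (if k = s i then 1 else 0))"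
    by (rule abstract_inv[OF finC cS npos _ sC st ss]) (simp add: m_def R_def)
  have "set_matrix_invertible C (killing_matrix ?G C) =
    set_matrix_invertible C (\<lambda>i k. if snd i \<noteq> snd k then 1 else of_nat m + of_nat n * (if k = s i then 1 else 0))"
    by (rule smi_cong) (rule entry)
  then show ?thesis unfolding killing_nondegenerate_def using inv by simp
qed
end
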